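(* Let $G$ be a $2$-connected graph and $x,y\in V(G)$. Suppose $G\setminus\{x,y\}$ has $k\ge2$ components and $\{x,y\}$ is not an admissible $2$-cut of $G$. Then (1) if $k\ge3$, $G\cong K_{2,3}$; (2) if $k=2$ and $xy\in E(G)$, $G\cong K_4\setminus e$; (3) if $k=2$ and $xy\notin E(G)$, at least one component of $G\setminus\{x,y\}$ is a single vertex.
   Context: Graphs are finite and simple. 2-sum: for $i=1,2$ let $G_i$ be disjoint graphs and $z_i\in V(G_i)$ incident with exactly two edges $x_iz_i,y_iz_i$; let $G_i'=G_i\setminus z_i$ if $x_iy_i\notin E(G_i)$ and $G_i'=G_i\setminus z_i\setminus x_iy_i$ otherwise. A 2-sum over $z_1,z_2$ is obtained from $G_1',G_2'$ by identifying $x_1$ with $x_2$ and $y_1$ with $y_2$ and then, if $x_iy_i\in E(G_i)$ for at least one $i$, adding an edge between the two identified vertices, which are called the joins. Two vertices $x,y$ of a $2$-connected graph $G$ form an admissible $2$-cut if $G$ is a 2-sum of two graphs, each having fewer edges than $G$, whose set of joins is $\{x,y\}$. *)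

theory Defs
  imports Main
begin

definition graph :: "'a set \<Rightarrow> 'a set set \<Rightarrow> bool" where
  "graph V E \<longleftrightarrow> finite V \<and> (\<forall>e\<in>E. \<exists>u v. e = {u, v} \<and> u \<noteq> v \<and> u \<in> V \<and> v \<in> V)"

definition adj :: "'a set set \<Rightarrow> ('a \<times> 'a) set" where
  "adj E = {(u, v). {u, v} \<in> E}"

text \<open>Induced subgraph on the vertices outside S (i.e. G minus S).\<close>
definition del_edges :: "'a set set \<Rightarrow> 'a set \<Rightarrow> 'a set set" where
  "del_edges E S = {e \<in> E. e \<inter> S = {}}"

definition connected_graph :: "'a set \<Rightarrow> 'a set set \<Rightarrow> bool" where
  "connected_graph V E \<longleftrightarrow> (\<forall>u\<in>V. \<forall>v\<in>V. (u, v) \<in> (adj E)\<^sup>*)"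

definition components :: "'a set \<Rightarrow> 'a set set \<Rightarrow> 'a set set" where
  "components V E = V // {(u, v). u \<in> V \<and> v \<in> V \<and> (u, v) \<in> (adj E)\<^sup>*}"

definition two_connected :: "'a set \<Rightarrow> 'a set set \<Rightarrow> bool" where
  "two_connected V E \<longleftrightarrow> card V \<ge> 3 \<and> connected_graph V E \<and>
     (\<forall>v\<in>V. connected_graph (V - {v}) (del_edges E {v}))"

definition graph_iso :: "'a set \<Rightarrow> 'a set set \<Rightarrow> 'b set \<Rightarrow> 'b set set \<Rightarrow> ('a \<Rightarrow> 'b) \<Rightarrow> bool" where
  "graph_iso V E V' E' f \<longleftrightarrow> bij_betw f V V' \<and>
     (\<forall>u\<in>V. \<forall>v\<in>V. {u, v} \<in> E \<longleftrightarrow> {f u, f v} \<in> E')"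

definition isomorphic :: "'a set \<Rightarrow> 'a set set \<Rightarrow> 'b set \<Rightarrow> 'b set set \<Rightarrow> bool" where
  "isomorphic V E V' E' \<longleftrightarrow> (\<exists>f. graph_iso V E V' E' f)"

definition K23_V :: "nat set" where "K23_V = {0..4}"
definition K23_E :: "nat set set" where
  "K23_E = {{i, j} | i j. i \<in> {0, 1} \<and> j \<in> {2, 3, 4}}"
definition K4e_V :: "nat set" where "K4e_V = {0..3}"
definition K4e_E :: "nat set set" where
  "K4e_E = {{i, j} | i j. i \<in> {0..3} \<and> j \<in> {0..3} \<and> i \<noteq> j} - {{0, 1}}"

definition sum_vertex :: "'a set \<Rightarrow> 'a set set \<Rightarrow> 'a \<Rightarrow> 'a \<Rightarrow> 'a \<Rightarrow> bool" where
  "sum_vertex V E z x y \<longleftrightarrow> z \<in> V \<and> x \<noteq> y \<and> {e \<in> E. z \<in> e} = {{x, z}, {y, z}}"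

definition prime_edges :: "'a set set \<Rightarrow> 'a \<Rightarrow> 'a \<Rightarrow> 'a \<Rightarrow> 'a set set" where
  "prime_edges E z x y = {e \<in> E. z \<notin> e} - {{x, y}}"

text \<open>The 2-sum over z1, z2, realised on the disjoint union type 'b + 'c: the vertex x2 is
  identified with x1 and y2 with y1 (represented by Inl x1, Inl y1); the joins are
  Inl x1 and Inl y1.\<close>
definition glue2 :: "'c \<Rightarrow> 'c \<Rightarrow> 'b \<Rightarrow> 'b \<Rightarrow> 'c \<Rightarrow> 'b + 'c" where
  "glue2 x2 y2 x1 y1 v = (if v = x2 then Inl x1 else if v = y2 then Inl y1 else Inr v)"

definition two_sum_V :: "'b set \<Rightarrow> 'b \<Rightarrow> 'b \<Rightarrow> 'b \<Rightarrow> 'c set \<Rightarrow> 'c \<Rightarrow> 'c \<Rightarrow> 'c \<Rightarrow> ('b + 'c) set" where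
  "two_sum_V V1 z1 x1 y1 V2 z2 x2 y2 =
     Inl ` (V1 - {z1}) \<union> glue2 x2 y2 x1 y1 ` (V2 - {z2})"

definition two_sum_E :: "'b set set \<Rightarrow> 'b \<Rightarrow> 'b \<Rightarrow> 'b \<Rightarrow> 'c set set \<Rightarrow> 'c \<Rightarrow> 'c \<Rightarrow> 'c \<Rightarrow> ('b + 'c) set set" where
  "two_sum_E E1 z1 x1 y1 E2 z2 x2 y2 =
     (image Inl) ` prime_edges E1 z1 x1 y1 \<union>
     (image (glue2 x2 y2 x1 y1)) ` prime_edges E2 z2 x2 y2 \<union>
     (if {x1, y1} \<in> E1 \<or> {x2, y2} \<in> E2 then {{Inl x1, Inl y1}} else {})"

text \<open>Summands are taken as graphs on nat (every finite graph is isomorphic to one).\<close>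
definition admissible_2cut :: "'a set \<Rightarrow> 'a set set \<Rightarrow> 'a \<Rightarrow> 'a \<Rightarrow> bool" where
  "admissible_2cut V E x y \<longleftrightarrow> two_connected V E \<and>
     (\<exists>(V1 :: nat set) E1 z1 x1 y1 (V2 :: nat set) E2 z2 x2 y2 f.
        graph V1 E1 \<and> graph V2 E2 \<and>
        sum_vertex V1 E1 z1 x1 y1 \<and> sum_vertex V2 E2 z2 x2 y2 \<and>
        card E1 < card E \<and> card E2 < card E \<and>
        graph_iso (two_sum_V V1 z1 x1 y1 V2 z2 x2 y2) (two_sum_E E1 z1 x1 y1 E2 z2 x2 y2) V E f \<and>
        f ` {Inl x1, Inl y1} = {x, y})"

end

theory Submission imports Defs begin

lemma graph_edge: assumes "graph V E" "e \<in> E" shows "\<exists>u v. e = {u,v} \<and> u \<noteq> v \<and> u \<in> V \<and> v \<in> V"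
  using assms unfolding graph_def by (elim conjE) (rule bspec)
lemma graph_sub: "graph V E \<Longrightarrow> e \<in> E \<Longrightarrow> e \<subseteq> V"
  using graph_edge by fastforce

lemma graph_finE: "graph V E \<Longrightarrow> finite E"
proof -
  assume g: "graph V E"
  then have "E \<subseteq> Pow V" using graph_sub by blast
  moreover have "finite V" using g unfolding graph_def by blast
  ultimately show ?thesis using finite_subset by blast
qed

lemma iso_lemma:
  assumes inj: "inj_on \<phi> V" and fphi: "\<And>v. v \<in> V \<Longrightarrow> f (\<phi> v) = v"
    and gr: "graph V E"
  shows "graph_iso (\<phi> ` V) ((image \<phi>) ` E) V E f"
proof -
  have "inj_on f (\<phi> ` V)"
  proof (rule inj_onI)
    fix s t assume "s \<in> \<phi> ` V" "t \<in> \<phi> ` V" "f s = f t"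
    then show "s = t" using fphi by auto
  qed
  moreover have "f ` \<phi> ` V = V" using fphi by (simp add: image_image)
  ultimately have B: "bij_betw f (\<phi> ` V) V" unfolding bij_betw_def by blast
  have R: "{u, v} \<in> (image \<phi>) ` E \<longleftrightarrow> {f u, f v} \<in> E" if uv: "u \<in> \<phi> ` V" "v \<in> \<phi> ` V" for u v
  proof -
    obtain a b where ab: "a \<in> V" "b \<in> V" "u = \<phi> a" "v = \<phi> b" using uv by blast
    have "{u,v} = \<phi> ` {a,b}" using ab by simp
    moreover have "inj_on (image \<phi>) (Pow V)" using inj inj_on_image_Pow by blast
    moreover have "E \<subseteq> Pow V" using gr graph_sub by blast
    moreover have "{a,b} \<in> Pow V" using ab by simp
    ultimately have "{u,v} \<in> (image \<phi>) ` E \<longleftrightarrow> {a,b} \<in> E"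
      using inj_on_image_mem_iff[of "image \<phi>" "Pow V" "{a,b}" E] by simp
    then show ?thesis using ab fphi by simp
  qed
  show ?thesis unfolding graph_iso_def using B R by blast
qed

lemma img_edge:
  assumes "inj_on g V" "graph V E" "e \<in> E" "e \<subseteq> W"
  shows "\<exists>u v. g ` e = {u,v} \<and> u \<noteq> v \<and> u \<in> g ` W \<and> v \<in> g ` W"
proof -
  obtain u v where uv: "e = {u,v}" "u \<noteq> v" "u \<in> V" "v \<in> V" using graph_edge assms(2,3) by metis
  have "g u \<noteq> g v" using uv assms(1) by (metis inj_on_contraD)
  moreover have "g u \<in> g ` W" "g v \<in> g ` W" using uv assms(4) by auto
  ultimately show ?thesis using uv by auto
qed

lemma adm_generic:
  assumes gr: "graph V E" and tc: "two_connected V E" and xV: "x \<in> V" and yV: "y \<in> V"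
    and xy: "x \<noteq> y"
    and AB: "A \<inter> B = {}" and ABV: "A \<union> B = V - {x,y}"
    and split: "\<forall>e\<in>E. e \<subseteq> A \<union> {x,y} \<or> e \<subseteq> B \<union> {x,y}"
    and cA: "3 \<le> card {e\<in>E. e \<subseteq> A \<union> {x,y}}"
    and cB: "3 \<le> card ({e\<in>E. e \<subseteq> B \<union> {x,y}} - {{x,y}})"
  shows "admissible_2cut V E x y"
proof -
  define EA where "EA = {e\<in>E. e \<subseteq> A \<union> {x,y}}"
  define EB where "EB = {e\<in>E. e \<subseteq> B \<union> {x,y}} - {{x,y}}"
  have finV: "finite V" using gr graph_def by auto
  have finE: "finite E" using gr graph_finE by blast
  have EPow: "E \<subseteq> Pow V" using gr graph_sub by blast
  obtain g where g: "bij_betw g V {0..<card V}" using ex_bij_betw_finite_nat finV by blast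
  define n where "n = card V"
  have ginj: "inj_on g V" using g bij_betw_def by blast
  have glt: "g v < n" if "v \<in> V" for v using g n_def bij_betwE that by fastforce
  have gneq: "g v \<noteq> n" if "v \<in> V" for v using glt[OF that] by simp
  have ngi: "n \<notin> g ` e" if "e \<subseteq> V" for e using gneq that by blast
  have Gin: "inj_on (image g) (Pow V)" using ginj inj_on_image_Pow by blast
  have gxy: "g x \<noteq> g y" using ginj xV yV xy by (metis inj_on_contraD)
  have AV: "A \<subseteq> V" "B \<subseteq> V" using ABV by auto
  have xB: "x \<notin> B" "y \<notin> B" "x \<notin> A" "y \<notin> A" using ABV by auto
  have ABxy: "A \<union> {x,y} \<subseteq> V" "B \<union> {x,y} \<subseteq> V" using AV xV yV by auto
  have EAsub: "EA \<subseteq> E" "EA \<subseteq> Pow (A \<union> {x,y})" unfolding EA_def by auto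
  have EBsub: "EB \<subseteq> E" "EB \<subseteq> Pow (B \<union> {x,y})" unfolding EB_def by auto
  have xyEB: "{x,y} \<notin> EB" unfolding EB_def by simp
  define \<phi> :: "'a \<Rightarrow> nat + nat" where "\<phi> v = (if v \<in> B then Inr (g v) else Inl (g v))" for v
  define f :: "nat + nat \<Rightarrow> 'a" where "f = case_sum (the_inv_into V g) (the_inv_into V g)"
  have fphi: "f (\<phi> v) = v" if "v \<in> V" for v
    using that by (simp add: f_def \<phi>_def the_inv_into_f_f[OF ginj])
  have phinj: "inj_on \<phi> V"
  proof (rule inj_onI)
    fix a b assume "a \<in> V" "b \<in> V" "\<phi> a = \<phi> b" then show "a = b" using fphi by metis
  qed
  define E1 where "E1 = image g ` EA \<union> {{g x, n}, {g y, n}}"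
  define V1 where "V1 = insert n (g ` (A \<union> {x,y}))"
  define E2 where "E2 = image g ` EB \<union> {{g x, n}, {g y, n}}"
  define V2 where "V2 = insert n (g ` (B \<union> {x,y}))"
  have gxn: "g x \<noteq> n" "g y \<noteq> n" using gneq xV yV by auto
  have n_img: "n \<notin> e" if "e \<in> image g ` EA \<union> image g ` EB" for e
  proof -
    from that obtain e' where e': "e' \<in> EA \<union> EB" "e = g ` e'" by blast
    have "e' \<subseteq> V" using e'(1) EAsub EBsub EPow by blast
    then show ?thesis using ngi e'(2) by simp
  qed
  have E1n: "{e \<in> E1. n \<in> e} = {{g x, n}, {g y, n}}"
  proof
    show "{e \<in> E1. n \<in> e} \<subseteq> {{g x, n}, {g y, n}}" unfolding E1_def using n_img by blast
    show "{{g x, n}, {g y, n}} \<subseteq> {e \<in> E1. n \<in> e}" unfolding E1_def by simp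
  qed
  have E2n: "{e \<in> E2. n \<in> e} = {{g x, n}, {g y, n}}"
  proof
    show "{e \<in> E2. n \<in> e} \<subseteq> {{g x, n}, {g y, n}}" unfolding E2_def using n_img by blast
    show "{{g x, n}, {g y, n}} \<subseteq> {e \<in> E2. n \<in> e}" unfolding E2_def by simp
  qed
  have gr1: "graph V1 E1" unfolding graph_def
  proof (intro conjI ballI)
    show "finite V1" unfolding V1_def using finV ABxy finite_subset by blast
    fix e assume "e \<in> E1"
    then consider (a) e' where "e' \<in> EA" "e = g ` e'" | (b) "e = {g x, n}" | (c) "e = {g y, n}"
      unfolding E1_def by blast
    then show "\<exists>u v. e = {u, v} \<and> u \<noteq> v \<and> u \<in> V1 \<and> v \<in> V1"
    proof cases
      case a
      then obtain u v where "g ` e' = {u,v}" "u \<noteq> v" "u \<in> g ` (A \<union> {x,y})" "v \<in> g ` (A \<union> {x,y})"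
        using img_edge[OF ginj gr, of e' "A \<union> {x,y}"] EAsub by blast
      then show ?thesis using a unfolding V1_def by blast
    next
      case b then show ?thesis using gxn unfolding V1_def by blast
    next
      case c then show ?thesis using gxn unfolding V1_def by blast
    qed
  qed
  have gr2: "graph V2 E2" unfolding graph_def
  proof (intro conjI ballI)
    show "finite V2" unfolding V2_def using finV ABxy finite_subset by blast
    fix e assume "e \<in> E2"
    then consider (a) e' where "e' \<in> EB" "e = g ` e'" | (b) "e = {g x, n}" | (c) "e = {g y, n}"
      unfolding E2_def by blast
    then show "\<exists>u v. e = {u, v} \<and> u \<noteq> v \<and> u \<in> V2 \<and> v \<in> V2"
    proof cases
      case a
      then obtain u v where "g ` e' = {u,v}" "u \<noteq> v" "u \<in> g ` (B \<union> {x,y})" "v \<in> g ` (B \<union> {x,y})"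
        using img_edge[OF ginj gr, of e' "B \<union> {x,y}"] EBsub by blast
      then show ?thesis using a unfolding V2_def by blast
    next
      case b then show ?thesis using gxn unfolding V2_def by blast
    next
      case c then show ?thesis using gxn unfolding V2_def by blast
    qed
  qed
  have sv1: "sum_vertex V1 E1 n (g x) (g y)"
    unfolding sum_vertex_def using E1n gxy by (simp add: V1_def insert_commute)
  have sv2: "sum_vertex V2 E2 n (g x) (g y)"
    unfolding sum_vertex_def using E2n gxy by (simp add: V2_def insert_commute)
  have EAB: "E = EA \<union> EB"
  proof
    show "E \<subseteq> EA \<union> EB"
    proof
      fix e assume eE: "e \<in> E"
      show "e \<in> EA \<union> EB"
      proof (cases "e \<subseteq> A \<union> {x,y}")
        case True then show ?thesis using eE unfolding EA_def by simp
      next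
        case False
        then have "e \<subseteq> B \<union> {x,y}" using split eE by blast
        moreover have "e \<noteq> {x,y}" using False by auto
        ultimately show ?thesis using eE unfolding EB_def by simp
      qed
    qed
    show "EA \<union> EB \<subseteq> E" using EAsub EBsub by blast
  qed
  have EABd: "EA \<inter> EB = {}"
  proof (rule ccontr)
    assume "EA \<inter> EB \<noteq> {}"
    then obtain e where e: "e \<in> EA" "e \<in> EB" by blast
    then have eE: "e \<in> E" "e \<subseteq> A \<union> {x,y}" "e \<subseteq> B \<union> {x,y}" "e \<noteq> {x,y}"
      unfolding EA_def EB_def by auto
    obtain u v where uv: "e = {u,v}" "u \<noteq> v" using graph_edge[OF gr eE(1)] by blast
    have "u \<in> {x,y}" "v \<in> {x,y}" using eE(2,3) uv AB by auto
    then have "e = {x,y}" using uv by auto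
    then show False using eE(4) by simp
  qed
  have finEA: "finite EA" "finite EB" using finE EAsub EBsub finite_subset by auto
  have cE: "card E = card EA + card EB" using EAB EABd finEA card_Un_disjoint by metis
  have two: "card {{g x, n}, {g y, n}} = 2"
  proof -
    have "{g x, n} \<noteq> {g y, n}" using gxy gxn by (auto simp: doubleton_eq_iff)
    then show ?thesis by simp
  qed
  have cimgA: "card (image g ` EA) = card EA"
    using card_image inj_on_subset[OF Gin] EAsub EPow by (metis subset_trans)
  have cimgB: "card (image g ` EB) = card EB"
    using card_image inj_on_subset[OF Gin] EBsub EPow by (metis subset_trans)
  have dA: "image g ` EA \<inter> {{g x, n}, {g y, n}} = {}" using n_img by blast
  have dB: "image g ` EB \<inter> {{g x, n}, {g y, n}} = {}" using n_img by blast
  have cE1: "card E1 = card EA + 2"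
    unfolding E1_def using card_Un_disjoint[OF _ _ dA] finEA cimgA two by simp
  have cE2: "card E2 = card EB + 2"
    unfolding E2_def using card_Un_disjoint[OF _ _ dB] finEA cimgB two by simp
  have lt1: "card E1 < card E" using cE1 cE cB unfolding EB_def by simp
  have lt2: "card E2 < card E" using cE2 cE cA unfolding EA_def by simp
  have phiA: "\<phi> v = Inl (g v)" if "v \<in> A \<union> {x,y}" for v
    using that AB xB unfolding \<phi>_def by auto
  have glue: "glue2 (g x) (g y) (g x) (g y) (g v) = \<phi> v" if vB: "v \<in> B \<union> {x,y}" for v
  proof -
    consider "v = x" | "v = y" | "v \<in> B" using vB by blast
    then show ?thesis
    proof cases
      case 1 then show ?thesis using xB unfolding glue2_def \<phi>_def by simp
    next
      case 2 then show ?thesis using xB gxy unfolding glue2_def \<phi>_def by simp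
    next
      case 3
      then have "v \<in> V" "v \<noteq> x" "v \<noteq> y" using AV xB by auto
      then have "g v \<noteq> g x" "g v \<noteq> g y" using ginj xV yV by (metis inj_on_contraD)+
      then show ?thesis using 3 unfolding glue2_def \<phi>_def by simp
    qed
  qed
  have V1n: "V1 - {n} = g ` (A \<union> {x,y})" unfolding V1_def using ngi ABxy by auto
  have V2n: "V2 - {n} = g ` (B \<union> {x,y})" unfolding V2_def using ngi ABxy by auto
  have TV: "two_sum_V V1 n (g x) (g y) V2 n (g x) (g y) = \<phi> ` V"
  proof -
    have "Inl ` g ` (A \<union> {x,y}) = \<phi> ` (A \<union> {x,y})"
      unfolding image_image using phiA by (intro image_cong) auto
    moreover have "glue2 (g x) (g y) (g x) (g y) ` g ` (B \<union> {x,y}) = \<phi> ` (B \<union> {x,y})"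
      unfolding image_image using glue by (intro image_cong) auto
    moreover have "V = (A \<union> {x,y}) \<union> (B \<union> {x,y})" using ABV xV yV by auto
    ultimately show ?thesis unfolding two_sum_V_def V1n V2n by (metis image_Un)
  qed
  have PE1: "prime_edges E1 n (g x) (g y) = image g ` (EA - {{x,y}})"
  proof -
    have "{e \<in> E1. n \<notin> e} = image g ` EA" unfolding E1_def using n_img by auto
    moreover have "image g ` EA - image g ` {{x,y}} = image g ` (EA - {{x,y}})"
    proof -
      have "EA - {{x,y}} \<subseteq> Pow V" "{{x,y}} \<subseteq> Pow V" using EAsub EPow xV yV by auto
      then show ?thesis using inj_on_image_set_diff[OF Gin, of EA "{{x,y}}"] by simp
    qed
    ultimately show ?thesis unfolding prime_edges_def by simp
  qed
  have PE2: "prime_edges E2 n (g x) (g y) = image g ` EB"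
  proof -
    have "{e \<in> E2. n \<notin> e} = image g ` EB" unfolding E2_def using n_img by auto
    moreover have "image g ` EB - image g ` {{x,y}} = image g ` (EB - {{x,y}})"
    proof -
      have "EB - {{x,y}} \<subseteq> Pow V" "{{x,y}} \<subseteq> Pow V" using EBsub EPow xV yV by auto
      then show ?thesis using inj_on_image_set_diff[OF Gin, of EB "{{x,y}}"] by simp
    qed
    moreover have "EB - {{x,y}} = EB" using xyEB by simp
    ultimately show ?thesis unfolding prime_edges_def by simp
  qed
  have im1: "(image Inl) ` image g ` (EA - {{x,y}}) = (image \<phi>) ` (EA - {{x,y}})"
  proof -
    have "Inl ` g ` e = \<phi> ` e" if eEA: "e \<in> EA - {{x,y}}" for e
    proof -
      have eA: "e \<subseteq> A \<union> {x,y}" using eEA EAsub by blast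
      show ?thesis unfolding image_image
      proof (rule image_cong[OF refl])
        fix v assume ve: "v \<in> e" show "Inl (g v) = \<phi> v" using phiA[OF subsetD[OF eA ve]] by simp
      qed
    qed
    then show ?thesis unfolding image_image by (rule image_cong[OF refl])
  qed
  have im2: "(image (glue2 (g x) (g y) (g x) (g y))) ` image g ` EB = (image \<phi>) ` EB"
  proof -
    have "glue2 (g x) (g y) (g x) (g y) ` g ` e = \<phi> ` e" if eEB: "e \<in> EB" for e
    proof -
      have eB: "e \<subseteq> B \<union> {x,y}" using eEB EBsub by blast
      show ?thesis unfolding image_image
      proof (rule image_cong[OF refl])
        fix v assume ve: "v \<in> e" show "glue2 (g x) (g y) (g x) (g y) (g v) = \<phi> v" using glue[OF subsetD[OF eB ve]] by simp
      qed
    qed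
    then show ?thesis unfolding image_image by (rule image_cong[OF refl])
  qed
  have EAP: "EA \<subseteq> Pow V" "EB \<subseteq> Pow V" using EAsub EBsub EPow by auto
  have gxyP: "{x,y} \<in> Pow V" using xV yV by simp
  have memA: "{g x, g y} \<in> image g ` EA \<longleftrightarrow> {x,y} \<in> EA"
    using inj_on_image_mem_iff[OF Gin gxyP EAP(1)] by simp
  have memB: "{g x, g y} \<in> image g ` EB \<longleftrightarrow> {x,y} \<in> EB"
    using inj_on_image_mem_iff[OF Gin gxyP EAP(2)] by simp
  have ne: "{g x, g y} \<noteq> {g x, n}" "{g x, g y} \<noteq> {g y, n}" using gxy gxn by (auto simp: doubleton_eq_iff)
  have xyEA: "{x,y} \<in> EA \<longleftrightarrow> {x,y} \<in> E" unfolding EA_def by simp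
  have cond: "({g x, g y} \<in> E1 \<or> {g x, g y} \<in> E2) \<longleftrightarrow> {x,y} \<in> E"
  proof -
    have "({g x, g y} \<in> E1 \<or> {g x, g y} \<in> E2) \<longleftrightarrow> ({g x, g y} \<in> image g ` EA \<or> {g x, g y} \<in> image g ` EB)"
      unfolding E1_def E2_def using ne by simp
    then show ?thesis using memA memB xyEA xyEB by simp
  qed
  have TE: "two_sum_E E1 n (g x) (g y) E2 n (g x) (g y) = (image \<phi>) ` E"
  proof -
    have pxy: "{Inl (g x), Inl (g y)} = \<phi> ` {x,y}" using phiA by simp
    have imA: "(image \<phi>) ` EA = (image \<phi>) ` (EA - {{x,y}}) \<union> (if {x,y} \<in> E then {\<phi> ` {x,y}} else {})"
    proof (cases "{x,y} \<in> E")
      case True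
      then have "EA = insert {x,y} (EA - {{x,y}})" using xyEA by (simp add: insert_absorb)
      then have "(image \<phi>) ` EA = insert (\<phi> ` {x,y}) ((image \<phi>) ` (EA - {{x,y}}))"
        by (metis image_insert)
      then show ?thesis using True by simp
    next
      case False
      then have "EA - {{x,y}} = EA" using xyEA by simp
      then show ?thesis using False by simp
    qed
    have "(image \<phi>) ` E = (image \<phi>) ` EA \<union> (image \<phi>) ` EB" using EAB by (metis image_Un)
    then show ?thesis unfolding two_sum_E_def PE1 PE2 im1 im2 cond pxy imA by (simp add: Un_ac)
  qed
  have iso: "graph_iso (two_sum_V V1 n (g x) (g y) V2 n (g x) (g y)) (two_sum_E E1 n (g x) (g y) E2 n (g x) (g y)) V E f"
    unfolding TV TE by (rule iso_lemma[OF phinj fphi gr])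
  have fimg: "f ` {Inl (g x), Inl (g y)} = {x, y}"
    using fphi[OF xV] fphi[OF yV] phiA by simp
  show ?thesis unfolding admissible_2cut_def
    apply (rule conjI[OF tc])
    apply (rule exI[of _ V1], rule exI[of _ E1], rule exI[of _ n], rule exI[of _ "g x"], rule exI[of _ "g y"])
    apply (rule exI[of _ V2], rule exI[of _ E2], rule exI[of _ n], rule exI[of _ "g x"], rule exI[of _ "g y"])
    apply (rule exI[of _ f])
    apply (intro conjI)
           apply (fact gr1)
          apply (fact gr2)
         apply (fact sv1)
        apply (fact sv2)
       apply (fact lt1)
      apply (fact lt2)
     apply (fact iso)
    by (fact fimg)
qed
lemma K4eE: "K4e_E = {{0,2},{0,3},{1,2},{1,3},{2,3}}"
proof -
  have S: "{{i, j} | i j. i \<in> {0..3::nat} \<and> j \<in> {0..3} \<and> i \<noteq> j} = {{0,1},{0,2},{0,3},{1,2},{1,3},{2,3}}"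
  proof (rule set_eqI, rule iffI)
    fix e assume "e \<in> {{i, j} | i j. i \<in> {0..3::nat} \<and> j \<in> {0..3} \<and> i \<noteq> j}"
    then obtain i j where ij: "e = {i,j}" "i \<in> {0..3::nat}" "j \<in> {0..3::nat}" "i \<noteq> j" by blast
    have "i = 0 \<or> i = 1 \<or> i = 2 \<or> i = 3" "j = 0 \<or> j = 1 \<or> j = 2 \<or> j = 3" using ij by auto
    then show "e \<in> {{0,1},{0,2},{0,3},{1,2},{1,3},{2,3}}" using ij by (elim disjE; simp add: doubleton_eq_iff)
  next
    have mem: "{i,j} \<in> {{i, j} | i j. i \<in> {0..3::nat} \<and> j \<in> {0..3} \<and> i \<noteq> j}"
      if "i \<le> 3" "j \<le> 3" "i \<noteq> j" for i j :: nat using that by auto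
    have "{{0,1},{0,2},{0,3},{1,2},{1,3},{2,3}} \<subseteq> {{i, j} | i j. i \<in> {0..3::nat} \<and> j \<in> {0..3} \<and> i \<noteq> j}"
      unfolding insert_subset by (intro conjI empty_subsetI mem) simp_all
    fix e :: "nat set" assume "e \<in> {{0,1},{0,2},{0,3},{1,2},{1,3},{2,3}}"
    then show "e \<in> {{i, j} | i j. i \<in> {0..3::nat} \<and> j \<in> {0..3} \<and> i \<noteq> j}"
      using \<open>{{0,1},{0,2},{0,3},{1,2},{1,3},{2,3}} \<subseteq> _\<close> by (rule subsetD[rotated])
  qed
  have "{{0,1},{0,2},{0,3},{1,2},{1,3},{2,3}} - {{0,1::nat}} = {{0,2},{0,3},{1,2},{1,3},{2,3}}"
    by (auto simp: doubleton_eq_iff)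
  then show ?thesis unfolding K4e_E_def S by simp
qed
lemma K23V: "K23_V = {0,1,2,3,4}" unfolding K23_V_def by auto
lemma K4eV: "K4e_V = {0,1,2,3}" unfolding K4e_V_def by auto
lemma K23E: "K23_E = {{0,2},{0,3},{0,4},{1,2},{1,3},{1,4}}" unfolding K23_E_def by auto

lemma two_elems: "finite X \<Longrightarrow> 2 \<le> card X \<Longrightarrow> \<exists>a b. a \<in> X \<and> b \<in> X \<and> a \<noteq> b"
proof -
  assume f: "finite X" and c: "2 \<le> card X"
  then have "X \<noteq> {}" by auto
  then obtain a where a: "a \<in> X" by blast
  have "card (X - {a}) \<ge> 1" using f c a by (simp add: card_Diff_singleton)
  then have "X - {a} \<noteq> {}" by (metis card.empty not_one_le_zero)
  then obtain b where "b \<in> X - {a}" by blast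
  then show ?thesis using a by blast
qed

lemma iso_lemma2:
  assumes inj: "inj_on f V" and img: "f ` V = V'" and EP: "E \<subseteq> Pow V" and EE: "image f ` E = E'"
  shows "graph_iso V E V' E' f"
proof -
  have B: "bij_betw f V V'" using inj img unfolding bij_betw_def by simp
  have R: "{u, v} \<in> E \<longleftrightarrow> {f u, f v} \<in> E'" if uv: "u \<in> V" "v \<in> V" for u v
  proof -
    have "{u,v} \<in> Pow V" using uv by simp
    then have "f ` {u,v} \<in> image f ` E \<longleftrightarrow> {u,v} \<in> E"
      using inj_on_image_mem_iff[OF inj_on_image_Pow[OF inj] _ EP] by blast
    then show ?thesis using EE by simp
  qed
  show ?thesis unfolding graph_iso_def using B R by blast
qed

lemma cross:
  assumes "(a,b) \<in> r\<^sup>*" "a \<in> S" "b \<notin> S"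
  shows "\<exists>u w. (u,w) \<in> r \<and> u \<in> S \<and> w \<notin> S"
  using assms by (induct rule: rtrancl_induct) auto

lemma adj_sym: "(u,v) \<in> adj F \<Longrightarrow> (v,u) \<in> adj F"
  by (simp add: adj_def insert_commute)

lemma rtr_sym: "(u,v) \<in> (adj F)\<^sup>* \<Longrightarrow> (v,u) \<in> (adj F)\<^sup>*"
proof (induct rule: rtrancl_induct)
  case base then show ?case by simp
next
  case (step a b) then show ?case using adj_sym converse_rtrancl_into_rtrancl by metis
qed

locale setting =
  fixes V :: "'a set" and E :: "'a set set" and x y :: 'a
  assumes gr: "graph V E" and tc: "two_connected V E" and xV: "x \<in> V" and yV: "y \<in> V"
    and xy: "x \<noteq> y"
begin

definition "V0 = V - {x,y}"
definition "E0 = del_edges E {x,y}"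
definition "R0 = {(u, v). u \<in> V0 \<and> v \<in> V0 \<and> (u, v) \<in> (adj E0)\<^sup>*}"
definition "K = components V0 E0"

lemma K_def': "K = V0 // R0" unfolding K_def components_def R0_def by (rule refl)

lemma eqv: "equiv V0 R0"
proof (rule equivI)
  show "R0 \<subseteq> V0 \<times> V0" unfolding R0_def by auto
  show "refl_on V0 R0" unfolding R0_def refl_on_def by auto
  show "sym R0"
  proof (rule symI)
    fix a b assume "(a,b) \<in> R0" then show "(b,a) \<in> R0" unfolding R0_def using rtr_sym[of a b E0] by simp
  qed
  show "trans R0"
  proof (rule transI)
    fix a b c assume "(a,b) \<in> R0" "(b,c) \<in> R0" then show "(a,c) \<in> R0"
      unfolding R0_def using rtrancl_trans[of a b "adj E0" c] by simp
  qed
qed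

lemma finV: "finite V" using gr graph_def by auto
lemma finE: "finite E" using gr graph_finE by blast
lemma finK: "finite K"
proof -
  have "finite V0" using finV unfolding V0_def by simp
  moreover have "R0 \<subseteq> V0 \<times> V0" unfolding R0_def by auto
  ultimately show ?thesis unfolding K_def' by (rule finite_quotient)
qed
lemma K_sub: "C \<in> K \<Longrightarrow> C \<subseteq> V0" unfolding K_def' by (rule in_quotient_imp_subset[OF eqv])
lemma K_ne: "C \<in> K \<Longrightarrow> C \<noteq> {}" unfolding K_def' by (rule in_quotient_imp_non_empty[OF eqv])
lemma K_disj: "C \<in> K \<Longrightarrow> D \<in> K \<Longrightarrow> C \<noteq> D \<Longrightarrow> C \<inter> D = {}"
  unfolding K_def' using quotient_disj[OF eqv, of C D] by blast
lemma K_Un: "\<Union>K = V0" unfolding K_def' by (rule Union_quotient[OF eqv])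
lemma finV0: "finite V0" using finV unfolding V0_def by simp
lemma finC: "C \<in> K \<Longrightarrow> finite C" using K_sub finV0 by (rule finite_subset)

lemma closed_path: assumes "C \<in> K" "u \<in> C" "v \<in> V0" "(u,v) \<in> (adj E0)\<^sup>*" shows "v \<in> C"
proof -
  obtain a where a: "C = R0 `` {a}" "a \<in> V0" using assms(1) K_def' by (auto elim: quotientE)
  have "(a,u) \<in> R0" using a assms(2) by blast
  then have "(a,v) \<in> R0" using assms(3,4) unfolding R0_def using rtrancl_trans[of a u "adj E0" v] by simp
  then show ?thesis using a by simp
qed

lemma closed_edge: assumes "C \<in> K" "u \<in> C" "v \<in> V0" "{u,v} \<in> E" shows "v \<in> C"
proof -
  have "u \<in> V0" using assms K_sub by blast
  then have "{u,v} \<in> E0" using assms(3,4) unfolding E0_def del_edges_def V0_def by auto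
  then have "(u,v) \<in> adj E0" unfolding adj_def by simp
  then show ?thesis using closed_path assms by blast
qed

lemma adj_x: assumes C: "C \<in> K" shows "\<exists>u\<in>C. {u,x} \<in> E"
proof -
  obtain a where aC: "a \<in> C" using K_ne[OF C] by blast
  have aV: "a \<in> V0" using aC K_sub C by blast
  have "connected_graph (V - {y}) (del_edges E {y})" using tc yV unfolding two_connected_def by blast
  moreover have "a \<in> V - {y}" "x \<in> V - {y}" using aV xV xy unfolding V0_def by auto
  ultimately have "(a,x) \<in> (adj (del_edges E {y}))\<^sup>*" unfolding connected_graph_def by blast
  moreover have "x \<notin> C" using K_sub[OF C] unfolding V0_def by blast
  ultimately obtain u w where uw: "(u,w) \<in> adj (del_edges E {y})" "u \<in> C" "w \<notin> C"
    using cross[of a x _ C] aC by blast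
  have e: "{u,w} \<in> E" "y \<notin> {u,w}" using uw(1) unfolding adj_def del_edges_def by auto
  have "w \<in> V" using graph_sub[OF gr e(1)] by simp
  have "w = x"
  proof (rule ccontr)
    assume "w \<noteq> x"
    then have "w \<in> V0" using \<open>w \<in> V\<close> e(2) unfolding V0_def by auto
    then have "w \<in> C" using closed_edge[OF C uw(2) _ e(1)] by simp
    then show False using uw(3) by simp
  qed
  then show ?thesis using uw(2) e(1) by blast
qed

lemma adj_y: assumes C: "C \<in> K" shows "\<exists>u\<in>C. {u,y} \<in> E"
proof -
  obtain a where aC: "a \<in> C" using K_ne[OF C] by blast
  have aV: "a \<in> V0" using aC K_sub C by blast
  have "connected_graph (V - {x}) (del_edges E {x})" using tc xV unfolding two_connected_def by blast
  moreover have "a \<in> V - {x}" "y \<in> V - {x}" using aV yV xy unfolding V0_def by auto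
  ultimately have "(a,y) \<in> (adj (del_edges E {x}))\<^sup>*" unfolding connected_graph_def by blast
  moreover have "y \<notin> C" using K_sub[OF C] unfolding V0_def by blast
  ultimately obtain u w where uw: "(u,w) \<in> adj (del_edges E {x})" "u \<in> C" "w \<notin> C"
    using cross[of a y _ C] aC by blast
  have e: "{u,w} \<in> E" "x \<notin> {u,w}" using uw(1) unfolding adj_def del_edges_def by auto
  have "w \<in> V" using graph_sub[OF gr e(1)] by simp
  have "w = y"
  proof (rule ccontr)
    assume "w \<noteq> y"
    then have "w \<in> V0" using \<open>w \<in> V\<close> e(2) unfolding V0_def by auto
    then have "w \<in> C" using closed_edge[OF C uw(2) _ e(1)] by simp
    then show False using uw(3) by simp
  qed
  then show ?thesis using uw(2) e(1) by blast
qed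

lemma inner_edge: assumes C: "C \<in> K" and ab: "a \<in> C" "b \<in> C" "a \<noteq> b"
  shows "\<exists>w\<in>C. {a,w} \<in> E \<and> w \<noteq> a"
proof -
  obtain c where c: "C = R0 `` {c}" "c \<in> V0" using C K_def' by (auto elim: quotientE)
  have "(c,a) \<in> R0" "(c,b) \<in> R0" using c ab by auto
  then have "(c,a) \<in> (adj E0)\<^sup>*" "(c,b) \<in> (adj E0)\<^sup>*" unfolding R0_def by auto
  then have "(a,b) \<in> (adj E0)\<^sup>*" using rtr_sym[of c a E0] rtrancl_trans[of a c "adj E0" b] by simp
  then obtain u w where uw: "(u,w) \<in> adj E0" "u \<in> {a}" "w \<notin> {a}"
    using cross[of a b _ "{a}"] ab(3) by blast
  have e: "{a,w} \<in> E" "x \<notin> {a,w}" "y \<notin> {a,w}" using uw unfolding adj_def E0_def del_edges_def by auto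
  have "w \<in> V" using graph_sub[OF gr e(1)] by simp
  then have "w \<in> V0" using e unfolding V0_def by auto
  then have "w \<in> C" using closed_edge[OF C ab(1) _ e(1)] by simp
  then show ?thesis using e uw by auto
qed


definition "FF T = {e \<in> E. e \<subseteq> \<Union>T \<union> {x,y}}"
definition "GG T = card (FF T - {{x,y}})"

lemma finFF: "finite (FF T - {{x,y}})" using finE unfolding FF_def by simp

lemma V0xy: "u \<in> V0 \<Longrightarrow> u \<noteq> x \<and> u \<noteq> y" unfolding V0_def by auto

lemma edges_C: assumes C: "C \<in> K"
  obtains u u' where "u \<in> C" "u' \<in> C" "{u,x} \<in> E" "{u',y} \<in> E"
  using adj_x[OF C] adj_y[OF C] by blast

lemma in_FF: assumes "C \<in> T" "e \<in> E" "e \<subseteq> C \<union> {x,y}" "e \<noteq> {x,y}" shows "e \<in> FF T - {{x,y}}"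
  using assms unfolding FF_def by auto

lemma GG2: assumes T: "T \<subseteq> K" and C: "C \<in> T" shows "2 \<le> GG T"
proof -
  have CK: "C \<in> K" using T C by blast
  obtain u u' where uu: "u \<in> C" "u' \<in> C" "{u,x} \<in> E" "{u',y} \<in> E" using edges_C[OF CK] by blast
  have nx: "u \<noteq> x" "u \<noteq> y" "u' \<noteq> x" "u' \<noteq> y" using uu K_sub[OF CK] V0xy by blast+
  have "{u,x} \<in> FF T - {{x,y}}" by (rule in_FF[OF C uu(3)]) (use uu nx xy in \<open>auto simp: doubleton_eq_iff\<close>)
  moreover have "{u',y} \<in> FF T - {{x,y}}" by (rule in_FF[OF C uu(4)]) (use uu nx xy in \<open>auto simp: doubleton_eq_iff\<close>)
  ultimately have sub: "{{u,x},{u',y}} \<subseteq> FF T - {{x,y}}" by simp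
  have "{u,x} \<noteq> {u',y}" using nx xy by (auto simp: doubleton_eq_iff)
  then have "card {{u,x},{u',y}} = 2" by simp
  then show ?thesis unfolding GG_def using card_mono[OF finFF sub] by simp
qed

lemma GG3: assumes T: "T \<subseteq> K" and C: "C \<in> T" and cC: "2 \<le> card C" shows "3 \<le> GG T"
proof -
  have CK: "C \<in> K" using T C by blast
  obtain u u' where uu: "u \<in> C" "u' \<in> C" "{u,x} \<in> E" "{u',y} \<in> E" using edges_C[OF CK] by blast
  have nx: "u \<noteq> x" "u \<noteq> y" "u' \<noteq> x" "u' \<noteq> y" using uu K_sub[OF CK] V0xy by blast+
  obtain a b where ab: "a \<in> C" "b \<in> C" "a \<noteq> b" using two_elems[OF finC[OF CK] cC] by blast
  obtain w where w: "w \<in> C" "{a,w} \<in> E" "w \<noteq> a" using inner_edge[OF CK ab] by blast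
  have nw: "a \<noteq> x" "a \<noteq> y" "w \<noteq> x" "w \<noteq> y" using ab w K_sub[OF CK] V0xy by blast+
  have "{u,x} \<in> FF T - {{x,y}}" by (rule in_FF[OF C uu(3)]) (use uu nx xy in \<open>auto simp: doubleton_eq_iff\<close>)
  moreover have "{u',y} \<in> FF T - {{x,y}}" by (rule in_FF[OF C uu(4)]) (use uu nx xy in \<open>auto simp: doubleton_eq_iff\<close>)
  moreover have "{a,w} \<in> FF T - {{x,y}}" by (rule in_FF[OF C w(2)]) (use ab w nw xy in \<open>auto simp: doubleton_eq_iff\<close>)
  ultimately have sub: "{{u,x},{u',y},{a,w}} \<subseteq> FF T - {{x,y}}" by simp
  have "{u,x} \<noteq> {u',y}" "{u,x} \<noteq> {a,w}" "{u',y} \<noteq> {a,w}" using nx nw xy by (auto simp: doubleton_eq_iff)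
  then have "card {{u,x},{u',y},{a,w}} = 3" by simp
  then show ?thesis unfolding GG_def using card_mono[OF finFF sub] by simp
qed

lemma GG4: assumes T: "T \<subseteq> K" and C: "C \<in> T" and D: "D \<in> T" and CD: "C \<noteq> D" shows "4 \<le> GG T"
proof -
  have CK: "C \<in> K" and DK: "D \<in> K" using T C D by blast+
  obtain u u' where uu: "u \<in> C" "u' \<in> C" "{u,x} \<in> E" "{u',y} \<in> E" using edges_C[OF CK] by blast
  have nx: "u \<noteq> x" "u \<noteq> y" "u' \<noteq> x" "u' \<noteq> y" using uu K_sub[OF CK] V0xy by blast+
  obtain v v' where vv: "v \<in> D" "v' \<in> D" "{v,x} \<in> E" "{v',y} \<in> E" using edges_C[OF DK] by blast
  have nv: "v \<noteq> x" "v \<noteq> y" "v' \<noteq> x" "v' \<noteq> y" using vv K_sub[OF DK] V0xy by blast+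
  have dis: "u \<noteq> v" "u' \<noteq> v'" using K_disj[OF CK DK CD] uu vv by blast+
  have "{u,x} \<in> FF T - {{x,y}}" by (rule in_FF[OF C uu(3)]) (use uu nx xy in \<open>auto simp: doubleton_eq_iff\<close>)
  moreover have "{u',y} \<in> FF T - {{x,y}}" by (rule in_FF[OF C uu(4)]) (use uu nx xy in \<open>auto simp: doubleton_eq_iff\<close>)
  moreover have "{v,x} \<in> FF T - {{x,y}}" by (rule in_FF[OF D vv(3)]) (use vv nv xy in \<open>auto simp: doubleton_eq_iff\<close>)
  moreover have "{v',y} \<in> FF T - {{x,y}}" by (rule in_FF[OF D vv(4)]) (use vv nv xy in \<open>auto simp: doubleton_eq_iff\<close>)
  ultimately have sub: "{{u,x},{u',y},{v,x},{v',y}} \<subseteq> FF T - {{x,y}}" by simp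
  have "{u,x} \<noteq> {u',y}" "{u,x} \<noteq> {v,x}" "{u,x} \<noteq> {v',y}" "{u',y} \<noteq> {v,x}" "{u',y} \<noteq> {v',y}" "{v,x} \<noteq> {v',y}"
    using nx nv xy dis by (auto simp: doubleton_eq_iff)
  then have "card {{u,x},{u',y},{v,x},{v',y}} = 4" by simp
  then show ?thesis unfolding GG_def using card_mono[OF finFF sub] by simp
qed


lemma edge_in_comp: assumes e: "e \<in> E"
  shows "e \<subseteq> {x,y} \<or> (\<exists>C\<in>K. e \<subseteq> C \<union> {x,y})"
proof -
  obtain u v where uv: "e = {u,v}" "u \<noteq> v" "u \<in> V" "v \<in> V" using graph_edge[OF gr e] by blast
  show ?thesis
  proof (cases "u \<in> V0")
    case True
    then obtain C where C: "C \<in> K" "u \<in> C" using K_Un by blast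
    have "v \<in> C \<union> {x,y}"
    proof (cases "v \<in> V0")
      case True then show ?thesis using closed_edge[OF C True] e uv by simp
    next
      case False then show ?thesis using uv unfolding V0_def by blast
    qed
    then show ?thesis using C uv by blast
  next
    case uF: False
    then have ux: "u \<in> {x,y}" using uv unfolding V0_def by simp
    show ?thesis
    proof (cases "v \<in> V0")
      case True
      then obtain C where C: "C \<in> K" "v \<in> C" using K_Un by blast
      then show ?thesis using ux uv by blast
    next
      case False then have "v \<in> {x,y}" using uv unfolding V0_def by simp
      then show ?thesis using ux uv by blast
    qed
  qed
qed

lemma adm_S: assumes S: "S \<subseteq> K" and c1: "3 \<le> GG S + (if {x,y} \<in> E then 1 else 0)"
  and c2: "3 \<le> GG (K - S)"
  shows "admissible_2cut V E x y"
proof (rule adm_generic[OF gr tc xV yV xy, of "\<Union>S" "\<Union>(K - S)"])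
  show "\<Union>S \<inter> \<Union>(K - S) = {}"
  proof (rule ccontr)
    assume "\<Union>S \<inter> \<Union>(K - S) \<noteq> {}"
    then obtain a C D where "a \<in> C" "C \<in> S" "a \<in> D" "D \<in> K - S" by blast
    then show False using K_disj[of C D] S by blast
  qed
  have "\<Union>S \<union> \<Union>(K - S) = \<Union>K" using S by blast
  then show "\<Union>S \<union> \<Union>(K - S) = V - {x,y}" using K_Un V0_def by simp
  show "\<forall>e\<in>E. e \<subseteq> \<Union>S \<union> {x, y} \<or> e \<subseteq> \<Union>(K - S) \<union> {x, y}"
  proof
    fix e assume e: "e \<in> E"
    show "e \<subseteq> \<Union>S \<union> {x, y} \<or> e \<subseteq> \<Union>(K - S) \<union> {x, y}"
      using edge_in_comp[OF e]
    proof
      assume "e \<subseteq> {x,y}" then show ?thesis by blast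
    next
      assume "\<exists>C\<in>K. e \<subseteq> C \<union> {x,y}"
      then obtain C where C: "C \<in> K" "e \<subseteq> C \<union> {x,y}" by blast
      show ?thesis
      proof (cases "C \<in> S")
        case True then show ?thesis using C by blast
      next
        case False then show ?thesis using C by blast
      qed
    qed
  qed
  have fin: "finite (FF S)" using finE unfolding FF_def by simp
  have "card (FF S) = GG S + (if {x,y} \<in> E then 1 else 0)"
  proof (cases "{x,y} \<in> E")
    case True
    then have "{x,y} \<in> FF S" unfolding FF_def by simp
    then have "card (FF S - {{x,y}}) = card (FF S) - 1" by (simp add: card_Diff_singleton)
    moreover have "card (FF S) \<ge> 1" using fin \<open>{x,y} \<in> FF S\<close> card_0_eq by fastforce
    ultimately show ?thesis using True unfolding GG_def by simp
  next
    case False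
    then have "{x,y} \<notin> FF S" unfolding FF_def by simp
    then show ?thesis using False unfolding GG_def by simp
  qed
  then show "3 \<le> card {e \<in> E. e \<subseteq> \<Union>S \<union> {x, y}}" using c1 unfolding FF_def by simp
  show "3 \<le> card ({e \<in> E. e \<subseteq> \<Union>(K - S) \<union> {x, y}} - {{x, y}})" using c2 unfolding GG_def FF_def by simp
qed

lemma sing_elem: assumes sing: "\<forall>C\<in>K. card C = 1" and a: "a \<in> V0"
  shows "{a} \<in> K"
proof -
  obtain C where C: "C \<in> K" "a \<in> C" using K_Un a by blast
  obtain c where "C = {c}" using sing C(1) card_1_singletonE by blast
  then show ?thesis using C by simp
qed

lemma sing_adj: assumes sing: "\<forall>C\<in>K. card C = 1" and a: "a \<in> V0"
  shows "{a,x} \<in> E" "{a,y} \<in> E"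
  using adj_x[OF sing_elem[OF sing a]] adj_y[OF sing_elem[OF sing a]] by auto

lemma sing_edges: assumes sing: "\<forall>C\<in>K. card C = 1" and e: "e \<in> E"
  shows "e = {x,y} \<or> (\<exists>a\<in>V0. e = {a,x} \<or> e = {a,y})"
proof -
  obtain u v where uv: "e = {u,v}" "u \<noteq> v" "u \<in> V" "v \<in> V" using graph_edge[OF gr e] by blast
  have "\<not> (u \<in> V0 \<and> v \<in> V0)"
  proof
    assume "u \<in> V0 \<and> v \<in> V0"
    then have "v \<in> {u}" using closed_edge[OF sing_elem[OF sing, of u]] e uv by auto
    then show False using uv by simp
  qed
  then consider "u \<in> {x,y}" "v \<in> {x,y}" | "u \<in> V0" "v \<in> {x,y}" | "v \<in> V0" "u \<in> {x,y}"
    using uv unfolding V0_def by blast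
  then show ?thesis
  proof cases
    case 1 then have "e = {x,y}" using uv by auto
    then show ?thesis by simp
  next
    case 2 then show ?thesis using uv by auto
  next
    case 3 then show ?thesis using uv by (auto simp: insert_commute)
  qed
qed


lemma card_ge2: assumes "C \<in> K" "card C \<noteq> 1" shows "2 \<le> card C"
proof -
  have "card C \<noteq> 0" using finC[OF assms(1)] K_ne[OF assms(1)] by simp
  then show ?thesis using assms(2) by linarith
qed

lemma part3: assumes k: "card K = 2" and nxy: "{x,y} \<notin> E" and na: "\<not> admissible_2cut V E x y"
  shows "\<exists>C\<in>K. card C = 1"
proof (rule ccontr)
  assume H: "\<not> (\<exists>C\<in>K. card C = 1)"
  obtain C D where CD: "K = {C,D}" "C \<noteq> D" using k card_2_iff by metis
  have CK: "C \<in> K" "D \<in> K" using CD by auto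
  have "3 \<le> GG {C}" using GG3[of "{C}" C] CK card_ge2[OF CK(1)] H by auto
  moreover have "K - {C} = {D}" using CD by auto
  moreover have "3 \<le> GG {D}" using GG3[of "{D}" D] CK card_ge2[OF CK(2)] H by auto
  ultimately have "admissible_2cut V E x y" using adm_S[of "{C}"] CK by simp
  then show False using na by simp
qed

lemma part2: assumes k: "card K = 2" and exy: "{x,y} \<in> E" and na: "\<not> admissible_2cut V E x y"
  shows "isomorphic V E K4e_V K4e_E"
proof -
  obtain C D where CD: "K = {C,D}" "C \<noteq> D" using k card_2_iff by metis
  have CK: "C \<in> K" "D \<in> K" using CD by auto
  have KC: "K - {C} = {D}" "K - {D} = {C}" using CD by auto
  have c1: "card C = 1"
  proof (rule ccontr)
    assume "card C \<noteq> 1"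
    then have "3 \<le> GG {C}" using GG3[of "{C}" C] CK card_ge2[OF CK(1)] by auto
    moreover have "2 \<le> GG {D}" using GG2[of "{D}" D] CK by auto
    ultimately have "admissible_2cut V E x y" using adm_S[of "{D}"] CK KC exy by simp
    then show False using na by simp
  qed
  have d1: "card D = 1"
  proof (rule ccontr)
    assume "card D \<noteq> 1"
    then have "3 \<le> GG {D}" using GG3[of "{D}" D] CK card_ge2[OF CK(2)] by auto
    moreover have "2 \<le> GG {C}" using GG2[of "{C}" C] CK by auto
    ultimately have "admissible_2cut V E x y" using adm_S[of "{C}"] CK KC exy by simp
    then show False using na by simp
  qed
  have sing: "\<forall>C\<in>K. card C = 1" using CD c1 d1 by auto
  obtain a where a: "C = {a}" using c1 card_1_singletonE by blast
  obtain b where b: "D = {b}" using d1 card_1_singletonE by blast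
  have V0ab: "V0 = {a,b}" using K_Un CD a b by (simp add: insert_commute)
  have ab: "a \<noteq> b" using CD a b by simp
  have abV: "a \<in> V0" "b \<in> V0" using V0ab by auto
  have nx: "a \<noteq> x" "a \<noteq> y" "b \<noteq> x" "b \<noteq> y" using abV V0xy by auto
  have VV: "V = {x,y,a,b}" using V0ab xV yV unfolding V0_def by auto
  have EE: "E = {{x,y},{a,x},{a,y},{b,x},{b,y}}"
  proof
    show "E \<subseteq> {{x,y},{a,x},{a,y},{b,x},{b,y}}"
    proof
      fix e assume "e \<in> E"
      then have "e = {x,y} \<or> (\<exists>c\<in>V0. e = {c,x} \<or> e = {c,y})" using sing_edges[OF sing] by blast
      then show "e \<in> {{x,y},{a,x},{a,y},{b,x},{b,y}}" using V0ab by auto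
    qed
    show "{{x,y},{a,x},{a,y},{b,x},{b,y}} \<subseteq> E" using exy sing_adj[OF sing abV(1)] sing_adj[OF sing abV(2)] by simp
  qed
  define f :: "'a \<Rightarrow> nat" where "f v = (if v = a then 0 else if v = b then 1 else if v = x then 2 else 3)" for v
  have fv: "f a = 0" "f b = 1" "f x = 2" "f y = 3" unfolding f_def using ab nx xy by auto
  have inj: "inj_on f V" unfolding VV inj_on_def using fv by simp
  have img: "f ` V = K4e_V" unfolding VV K4eV using fv by auto
  have EP: "E \<subseteq> Pow V" using graph_sub[OF gr] by blast
  have EEi: "image f ` E = K4e_E" unfolding EE K4eE using fv by (simp add: insert_commute)
  show ?thesis unfolding isomorphic_def using iso_lemma2[OF inj img EP EEi] by blast
qed


lemma part1: assumes k: "3 \<le> card K" and na: "\<not> admissible_2cut V E x y"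
  shows "isomorphic V E K23_V K23_E"
proof -
  have Kne: "K \<noteq> {}" using k by auto
  then obtain C0 where C0: "C0 \<in> K" by blast
  have ck: "card (K - {C0}) \<ge> 2" using k C0 finK by (simp add: card_Diff_singleton)
  obtain D1 D2 where D: "D1 \<in> K - {C0}" "D2 \<in> K - {C0}" "D1 \<noteq> D2"
    using two_elems[OF _ ck] finK by blast
  have G4: "4 \<le> GG (K - {C0})" using GG4[OF _ D] by blast
  have nxy: "{x,y} \<notin> E"
  proof
    assume exy: "{x,y} \<in> E"
    have "2 \<le> GG {C0}" using GG2[of "{C0}" C0] C0 by auto
    then have "admissible_2cut V E x y" using adm_S[of "{C0}"] C0 G4 exy by simp
    then show False using na by simp
  qed
  have sing: "\<forall>C\<in>K. card C = 1"
  proof (rule ccontr)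
    assume "\<not> (\<forall>C\<in>K. card C = 1)"
    then obtain C where C: "C \<in> K" "card C \<noteq> 1" by blast
    have "card (K - {C}) \<ge> 2" using k C finK by (simp add: card_Diff_singleton)
    then obtain D1 D2 where D: "D1 \<in> K - {C}" "D2 \<in> K - {C}" "D1 \<noteq> D2"
      using two_elems[OF _ ] finK by blast
    have "4 \<le> GG (K - {C})" using GG4[OF _ D] by blast
    moreover have "3 \<le> GG {C}" using GG3[of "{C}" C] C card_ge2[OF C] by auto
    ultimately have "admissible_2cut V E x y" using adm_S[of "{C}"] C by simp
    then show False using na by simp
  qed
  have k3: "card K = 3"
  proof (rule ccontr)
    assume "card K \<noteq> 3"
    then have k4: "4 \<le> card K" using k by simp
    have k2: "2 \<le> card K" using k4 by simp
    obtain C1 C2 where C: "C1 \<in> K" "C2 \<in> K" "C1 \<noteq> C2" using two_elems[OF finK k2] by blast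
    have sub: "{C1,C2} \<subseteq> K" using C by simp
    have "card {C1,C2} = 2" using C(3) by simp
    moreover have "card (K - {C1,C2}) = card K - card {C1,C2}"
      using card_Diff_subset[OF finite_subset[OF sub finK] sub] .
    ultimately have "card (K - {C1,C2}) \<ge> 2" using k4 by simp
    then obtain D1 D2 where D: "D1 \<in> K - {C1,C2}" "D2 \<in> K - {C1,C2}" "D1 \<noteq> D2"
      using two_elems[of "K - {C1,C2}"] finK by blast
    have "4 \<le> GG (K - {C1,C2})" using GG4[OF _ D] by blast
    moreover have "4 \<le> GG {C1,C2}" by (rule GG4[OF sub _ _ C(3)]) simp_all
    ultimately have "admissible_2cut V E x y" using adm_S[OF sub] by simp
    then show False using na by simp
  qed
  obtain C1 C2 C3 where CC: "K = {C1,C2,C3}" "C1 \<noteq> C2" "C2 \<noteq> C3" "C1 \<noteq> C3"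
    using k3 card_3_iff by metis
  have CK: "C1 \<in> K" "C2 \<in> K" "C3 \<in> K" using CC by auto
  obtain a where a: "C1 = {a}" using sing CK card_1_singletonE by blast
  obtain b where b: "C2 = {b}" using sing CK card_1_singletonE by blast
  obtain c where c: "C3 = {c}" using sing CK card_1_singletonE by blast
  have V0abc: "V0 = {a,b,c}" using K_Un CC a b c by auto
  have ab: "a \<noteq> b" "b \<noteq> c" "a \<noteq> c" using CC a b c by auto
  have abV: "a \<in> V0" "b \<in> V0" "c \<in> V0" using V0abc by auto
  have nx: "a \<noteq> x" "a \<noteq> y" "b \<noteq> x" "b \<noteq> y" "c \<noteq> x" "c \<noteq> y" using abV V0xy by auto
  have VV: "V = {x,y,a,b,c}" using V0abc xV yV unfolding V0_def by auto
  have EE: "E = {{a,x},{a,y},{b,x},{b,y},{c,x},{c,y}}"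
  proof
    show "E \<subseteq> {{a,x},{a,y},{b,x},{b,y},{c,x},{c,y}}"
    proof
      fix e assume "e \<in> E"
      then have "e = {x,y} \<or> (\<exists>d\<in>V0. e = {d,x} \<or> e = {d,y})" using sing_edges[OF sing] by blast
      then show "e \<in> {{a,x},{a,y},{b,x},{b,y},{c,x},{c,y}}" using V0abc nxy \<open>e \<in> E\<close> by auto
    qed
    show "{{a,x},{a,y},{b,x},{b,y},{c,x},{c,y}} \<subseteq> E"
      using sing_adj[OF sing abV(1)] sing_adj[OF sing abV(2)] sing_adj[OF sing abV(3)] by simp
  qed
  define f :: "'a \<Rightarrow> nat" where "f v = (if v = x then 0 else if v = y then 1 else if v = a then 2 else if v = b then 3 else 4)" for v
  have fv: "f x = 0" "f y = 1" "f a = 2" "f b = 3" "f c = 4" unfolding f_def using ab nx xy by auto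
  have inj: "inj_on f V" unfolding VV inj_on_def using fv by simp
  have img: "f ` V = K23_V" unfolding VV K23V using fv by auto
  have EP: "E \<subseteq> Pow V" using graph_sub[OF gr] by blast
  have EEi: "image f ` E = K23_E" unfolding EE K23E using fv by (simp add: insert_commute)
  show ?thesis unfolding isomorphic_def using iso_lemma2[OF inj img EP EEi] by blast
qed

end

lemma conn_comp: assumes "connected_graph W F" shows "card (components W F) \<le> 1"
proof -
  let ?R = "{(u, v). u \<in> W \<and> v \<in> W \<and> (u, v) \<in> (adj F)\<^sup>*}"
  have "components W F \<subseteq> {W}"
  proof
    fix X assume "X \<in> components W F"
    then have "X \<in> W // ?R" unfolding components_def .
    then obtain a where a: "X = ?R `` {a}" "a \<in> W" by (rule quotientE)
    have "?R `` {a} = W"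
    proof (rule set_eqI)
      fix v show "v \<in> ?R `` {a} \<longleftrightarrow> v \<in> W" using a(2) assms unfolding connected_graph_def by auto
    qed
    then show "X \<in> {W}" using a by simp
  qed
  then have "card (components W F) \<le> card {W}" by (rule card_mono[rotated]) simp
  then show ?thesis by simp
qed

theorem mainTheorem5:
  fixes V :: "'a set" and E :: "'a set set" and x y :: 'a and k :: nat
  assumes "graph V E"
    and "two_connected V E"
    and "x \<in> V" and "y \<in> V"
    and "k = card (components (V - {x, y}) (del_edges E {x, y}))"
    and "k \<ge> 2"
    and "\<not> admissible_2cut V E x y"
  shows "(k \<ge> 3 \<longrightarrow> isomorphic V E K23_V K23_E)
       \<and> (k = 2 \<and> {x, y} \<in> E \<longrightarrow> isomorphic V E K4e_V K4e_E)
       \<and> (k = 2 \<and> {x, y} \<notin> E \<longrightarrow>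
            (\<exists>C \<in> components (V - {x, y}) (del_edges E {x, y}). card C = 1))"
proof -
  have xy: "x \<noteq> y"
  proof
    assume "x = y"
    then have "connected_graph (V - {x,y}) (del_edges E {x,y})"
      using assms(2,3) unfolding two_connected_def by simp
    then have "k \<le> 1" using conn_comp assms(5) by simp
    then show False using assms(6) by simp
  qed
  interpret setting V E x y using assms(1-4) xy by unfold_locales
  have kK: "k = card K" unfolding K_def V0_def E0_def using assms(5) by simp
  have KK: "K = components (V - {x, y}) (del_edges E {x, y})" unfolding K_def V0_def E0_def by simp
  have 1: "k \<ge> 3 \<longrightarrow> isomorphic V E K23_V K23_E" using part1 kK assms(7) by simp
  have 2: "k = 2 \<and> {x, y} \<in> E \<longrightarrow> isomorphic V E K4e_V K4e_E" using part2 kK assms(7) by simp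
  have 3: "k = 2 \<and> {x, y} \<notin> E \<longrightarrow> (\<exists>C \<in> components (V - {x, y}) (del_edges E {x, y}). card C = 1)"
    using part3 kK KK assms(7) by simp
  show ?thesis using 1 2 3 by (intro conjI)
qed

end
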